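(* Let $K$ be any field, let $L\subset\mathbb{Z}^m$ be a non-zero lattice with $L\cap\mathbb{N}^m=\{\mathbf 0\}$, and let $I_L\subset K[x_1,\ldots,x_m]$ be its lattice ideal. If $F_1,\ldots,F_s\in I_L$ are polynomials with $\mathrm{rad}(I_L)=\mathrm{rad}(F_1,\ldots,F_s)$, then $\bigcup_{i=1}^{s}\Gamma_L(F_i)$ is a spanning subcomplex of $\Gamma_L$.
   Context: For $\mathbf u\in\mathbb{N}^m$ write $\mathbf x^{\mathbf u}=x_1^{u_1}\cdots x_m^{u_m}$; for $\mathbf u\in\mathbb{Z}^m$, $\mathbf u_+,\mathbf u_-\in\mathbb{N}^m$ are its positive and negative parts ($\mathbf u=\mathbf u_+-\mathbf u_-$). The lattice ideal is $I_L=(\mathbf x^{\mathbf u_+}-\mathbf x^{\mathbf u_-}:\mathbf u\in L)$. The saturation is $\mathrm{Sat}(L)=\{\mathbf u\in\mathbb{Z}^m: d\mathbf u\in L\text{ for some nonzero }d\in\mathbb{Z}\}$, and $\mathcal{A}=\{\mathbf a_1,\ldots,\mathbf a_m\}\subset\mathbb{Z}^n$ is a vector configuration with $\mathrm{Sat}(L)=\ker_{\mathbb{Z}}(\mathcal{A})=\{\mathbf q\in\mathbb{Z}^m:\sum q_i\mathbf a_i=\mathbf 0\}$. The $\mathcal{A}$-degree of $\mathbf x^{\mathbf u}$ is $\sum u_i\mathbf a_i$. The support of $\mathbf v\in\mathbb{Z}^m$ is $\mathrm{supp}(\mathbf v)=\{i:v_i\neq0\}$, and $\mathrm{supp}(\mathbf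 x^{\mathbf w})=\mathrm{supp}(\mathbf w)$. A monomial $M$ is an indispensable monomial of $I_L$ if every system of binomial generators of $I_L$ contains a binomial having $M$ as one of its monomials. Let $\mathcal{T}$ be the set of supports of indispensable monomials of $I_L$ and $\mathcal{T}_{\min}$ the set of inclusion-minimal elements of $\mathcal{T}$. The simplicial complex $\Gamma_L$ has vertex set $\mathcal{T}_{\min}$, and a subset $\{E_1,\ldots,E_k\}\subseteq\mathcal{T}_{\min}$ is a face iff there exist monomials $M_1,\ldots,M_k$ with $\mathrm{supp}(M_i)=E_i$ all having the same $\mathcal{A}$-degree. For a polynomial $F$, $\Gamma_L(F)$ is the induced subcomplex of $\Gamma_L$ on the vertices $E\in\mathcal{T}_{\min}$ such that $E=\mathrm{supp}(M)$ for some monomial $M$ occurring in $F$. A subcomplex is spanning if it has the same vertex set as $\Gamma_L$. *)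

theory Defs
  imports Main "HOL-Library.Poly_Mapping"
begin

text \<open>Polynomials over a ring 'k in the variables x_0, ..., x_(m-1) (indices shifted by one
 w.r.t. the paper).\<close>

type_synonym 'k mpoly = "(nat \<Rightarrow>\<^sub>0 nat) \<Rightarrow>\<^sub>0 'k"

definition xmon :: "(nat \<Rightarrow>\<^sub>0 nat) \<Rightarrow> 'k::comm_ring_1 mpoly" where
  "xmon u = Poly_Mapping.single u 1"

definition is_exp :: "nat \<Rightarrow> (nat \<Rightarrow>\<^sub>0 nat) \<Rightarrow> bool" where
  "is_exp m u \<longleftrightarrow> Poly_Mapping.keys u \<subseteq> {..<m}"

definition polys :: "nat \<Rightarrow> 'k::comm_ring_1 mpoly set" where
  "polys m = {p. \<forall>u\<in>Poly_Mapping.keys p. is_exp m u}"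

definition gen_ideal :: "nat \<Rightarrow> 'k::comm_ring_1 mpoly set \<Rightarrow> 'k mpoly set" where
  "gen_ideal m S = {p. \<exists>G c. finite G \<and> G \<subseteq> S \<and> (\<forall>g\<in>G. c g \<in> polys m)
                         \<and> p = (\<Sum>g\<in>G. c g * g)}"

definition radical :: "nat \<Rightarrow> 'k::comm_ring_1 mpoly set \<Rightarrow> 'k mpoly set" where
  "radical m I = {f \<in> polys m. \<exists>n::nat. f ^ n \<in> I}"

definition zvec :: "nat \<Rightarrow> (nat \<Rightarrow> int) set" where
  "zvec m = {u. \<forall>i\<ge>m. u i = 0}"

definition is_lattice :: "nat \<Rightarrow> (nat \<Rightarrow> int) set \<Rightarrow> bool" where
  "is_lattice m L \<longleftrightarrow> L \<subseteq> zvec m \<and> (\<lambda>_. 0) \<in> L \<and> (\<forall>u\<in>L. \<forall>v\<in>L. (\<lambda>i. u i + v i) \<in> L \<and> (\<lambda>i. - u i) \<in> L)"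

text \<open>Positive part u_+ of an integer vector, as an exponent vector (u_- = posp m (\<lambda>i. - u i)).\<close>
definition posp :: "nat \<Rightarrow> (nat \<Rightarrow> int) \<Rightarrow> (nat \<Rightarrow>\<^sub>0 nat)" where
  "posp m u = Abs_poly_mapping (\<lambda>i. if i < m then nat (u i) else 0)"

definition lattice_ideal :: "'k::comm_ring_1 itself \<Rightarrow> nat \<Rightarrow> (nat \<Rightarrow> int) set \<Rightarrow> 'k mpoly set" where
  "lattice_ideal K m L =
     gen_ideal m {xmon (posp m u) - xmon (posp m (\<lambda>i. - u i)) | u. u \<in> L}"

definition Sat :: "nat \<Rightarrow> (nat \<Rightarrow> int) set \<Rightarrow> (nat \<Rightarrow> int) set" where
  "Sat m L = {u \<in> zvec m. \<exists>d::int. d \<noteq> 0 \<and> (\<lambda>i. d * u i) \<in> L}"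

text \<open>Vector configuration A = {a_0,...,a_(m-1)} in Z^n: the vector a_i has coordinates A i j, j < n.\<close>
definition kerZ :: "nat \<Rightarrow> nat \<Rightarrow> (nat \<Rightarrow> nat \<Rightarrow> int) \<Rightarrow> (nat \<Rightarrow> int) set" where
  "kerZ m n A = {q \<in> zvec m. \<forall>j<n. (\<Sum>i<m. q i * A i j) = 0}"

definition Adeg :: "nat \<Rightarrow> nat \<Rightarrow> (nat \<Rightarrow> nat \<Rightarrow> int) \<Rightarrow> (nat \<Rightarrow>\<^sub>0 nat) \<Rightarrow> (nat \<Rightarrow> int)" where
  "Adeg m n A u = (\<lambda>j. if j < n then (\<Sum>i<m. int (Poly_Mapping.lookup u i) * A i j) else 0)"

definition binomial_gen_system ::
    "'k::comm_ring_1 itself \<Rightarrow> nat \<Rightarrow> (nat \<Rightarrow> int) set \<Rightarrow> ((nat \<Rightarrow>\<^sub>0 nat) \<times> (nat \<Rightarrow>\<^sub>0 nat)) set \<Rightarrow> bool" where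
  "binomial_gen_system K m L B \<longleftrightarrow>
     (\<forall>(u, v)\<in>B. is_exp m u \<and> is_exp m v \<and> u \<noteq> v) \<and>
     gen_ideal m {(xmon u - xmon v :: 'k mpoly) | u v. (u, v) \<in> B} = lattice_ideal K m L"

definition indispensable_monomial ::
    "'k::comm_ring_1 itself \<Rightarrow> nat \<Rightarrow> (nat \<Rightarrow> int) set \<Rightarrow> (nat \<Rightarrow>\<^sub>0 nat) \<Rightarrow> bool" where
  "indispensable_monomial K m L w \<longleftrightarrow> is_exp m w \<and>
     (\<forall>B. binomial_gen_system K m L B \<longrightarrow> (\<exists>(u, v)\<in>B. w = u \<or> w = v))"

definition Tsupp :: "'k::comm_ring_1 itself \<Rightarrow> nat \<Rightarrow> (nat \<Rightarrow> int) set \<Rightarrow> nat set set" where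
  "Tsupp K m L = {Poly_Mapping.keys w | w. indispensable_monomial K m L w}"

definition Tmin :: "'k::comm_ring_1 itself \<Rightarrow> nat \<Rightarrow> (nat \<Rightarrow> int) set \<Rightarrow> nat set set" where
  "Tmin K m L = {E \<in> Tsupp K m L. \<forall>E'\<in>Tsupp K m L. E' \<subseteq> E \<longrightarrow> E' = E}"

definition GammaL ::
    "'k::comm_ring_1 itself \<Rightarrow> nat \<Rightarrow> nat \<Rightarrow> (nat \<Rightarrow> nat \<Rightarrow> int) \<Rightarrow> (nat \<Rightarrow> int) set \<Rightarrow> nat set set set" where
  "GammaL K m n A L = {\<sigma>. \<sigma> \<subseteq> Tmin K m L \<and>
     (\<exists>M d. \<forall>E\<in>\<sigma>. is_exp m (M E) \<and> Poly_Mapping.keys (M E) = E \<and> Adeg m n A (M E) = d)}"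

definition GammaF ::
    "'k::comm_ring_1 itself \<Rightarrow> nat \<Rightarrow> nat \<Rightarrow> (nat \<Rightarrow> nat \<Rightarrow> int) \<Rightarrow> (nat \<Rightarrow> int) set \<Rightarrow> 'k mpoly \<Rightarrow> nat set set set" where
  "GammaF K m n A L F = {\<sigma> \<in> GammaL K m n A L.
     \<sigma> \<subseteq> {E \<in> Tmin K m L. \<exists>u\<in>Poly_Mapping.keys F. Poly_Mapping.keys u = E}}"

definition spanning_subcomplex ::
    "'k::comm_ring_1 itself \<Rightarrow> nat \<Rightarrow> nat \<Rightarrow> (nat \<Rightarrow> nat \<Rightarrow> int) \<Rightarrow> (nat \<Rightarrow> int) set \<Rightarrow> nat set set set \<Rightarrow> bool" where
  "spanning_subcomplex K m n A L \<Delta> \<longleftrightarrow>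
     \<Delta> \<subseteq> GammaL K m n A L \<and> (\<forall>\<sigma>\<in>\<Delta>. \<forall>\<tau>\<subseteq>\<sigma>. \<tau> \<in> \<Delta>) \<and> \<Union>\<Delta> = Tmin K m L"

end

theory Submission
  imports Defs
begin


abbreviation lk where "lk \<equiv> Poly_Mapping.lookup"
abbreviation ks where "ks \<equiv> Poly_Mapping.keys"
abbreviation sg where "sg \<equiv> Poly_Mapping.single"

lemma expand: "p = (\<Sum>u\<in>ks p. sg u (lk p u))"
  by (rule poly_mapping_eqI) (simp add: lookup_sum lookup_single when_def in_keys_iff)

lemma keys_add_nat: "ks (u + v :: 'a \<Rightarrow>\<^sub>0 nat) = ks u \<union> ks v"
  by (auto simp: in_keys_iff lookup_add)

definition zd :: "(nat \<Rightarrow>\<^sub>0 nat) \<Rightarrow> (nat \<Rightarrow>\<^sub>0 nat) \<Rightarrow> nat \<Rightarrow> int" where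
  "zd a b = (\<lambda>i. int (lk a i) - int (lk b i))"

definition pi :: "nat set \<Rightarrow> 'k::comm_ring_1 mpoly \<Rightarrow> 'k mpoly" where
  "pi E p = Abs_poly_mapping (\<lambda>u. if ks u \<subseteq> E then lk p u else 0)"

lemma lookup_pi: "lk (pi E p) u = (if ks u \<subseteq> E then lk p u else 0)"
proof -
  have "finite {u. (if ks u \<subseteq> E then lk p u else 0) \<noteq> 0}"
    by (rule finite_subset[of _ "ks p"]) (auto simp: in_keys_iff)
  then show ?thesis unfolding pi_def by simp
qed

lemma pi_add: "pi E (p + q) = pi E p + pi E q"
  by (rule poly_mapping_eqI) (simp add: lookup_pi lookup_add)

lemma pi_zero: "pi E 0 = 0"
  by (rule poly_mapping_eqI) (simp add: lookup_pi)

lemma pi_sum: "pi E (sum f A) = (\<Sum>a\<in>A. pi E (f a))"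
  by (induction A rule: infinite_finite_induct) (simp_all add: pi_zero pi_add)

lemma pi_minus: "pi E (p - q) = pi E p - pi E q"
  by (rule poly_mapping_eqI) (simp add: lookup_pi lookup_minus)

lemma pi_single: "pi E (sg u a) = (if ks u \<subseteq> E then sg u a else 0)"
  by (rule poly_mapping_eqI) (auto simp: lookup_pi lookup_single when_def)

lemma pi_expand: "pi E p = (\<Sum>u\<in>ks p. if ks u \<subseteq> E then sg u (lk p u) else 0)"
proof -
  have "pi E p = pi E (\<Sum>u\<in>ks p. sg u (lk p u))" by (subst expand[symmetric]) (rule refl)
  then show ?thesis by (simp add: pi_sum pi_single)
qed

lemma pi_mult: "pi E (p * q) = pi E p * pi E q"
proof -
  have "p * q = (\<Sum>u\<in>ks p. \<Sum>v\<in>ks q. sg (u+v) (lk p u * lk q v))"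
    apply (subst expand[of p], subst expand[of q])
    by (simp add: sum_product mult_single)
  then have "pi E (p * q) = (\<Sum>u\<in>ks p. \<Sum>v\<in>ks q. pi E (sg (u+v) (lk p u * lk q v)))"
    by (simp add: pi_sum)
  also have "\<dots> = (\<Sum>u\<in>ks p. \<Sum>v\<in>ks q. (if ks u \<subseteq> E then sg u (lk p u) else 0) * (if ks v \<subseteq> E then sg v (lk q v) else 0))"
    by (intro sum.cong refl) (auto simp: pi_single keys_add_nat mult_single)
  also have "\<dots> = pi E p * pi E q"
    by (simp add: pi_expand sum_product)
  finally show ?thesis .
qed

lemma pi_one: "pi E 1 = 1"
  by (rule poly_mapping_eqI) (auto simp: lookup_pi lookup_one when_def)

lemma pi_power: "pi E (p ^ n) = (pi E p) ^ n"
  by (induction n) (simp_all add: pi_one pi_mult)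



lemma lookup_posp: "lk (posp m u) i = (if i < m then nat (u i) else 0)"
proof -
  have "finite {i. (if i < m then nat (u i) else 0) \<noteq> 0}"
    by (rule finite_subset[of _ "{..<m}"]) auto
  then show ?thesis unfolding posp_def by simp
qed

lemma is_exp_posp: "is_exp m (posp m u)"
  unfolding is_exp_def by (auto simp: in_keys_iff lookup_posp split: if_splits)

lemma zd_posp: "u \<in> zvec m \<Longrightarrow> zd (posp m u) (posp m (\<lambda>i. - u i)) = u"
  unfolding zd_def zvec_def by (auto simp: lookup_posp fun_eq_iff)

lemma zd_self: "zd u u = (\<lambda>_. 0)" by (simp add: zd_def)

lemma zd_swap: "zd b a = (\<lambda>i. - zd a b i)" by (simp add: zd_def fun_eq_iff)

lemma lat_add: "is_lattice m L \<Longrightarrow> x \<in> L \<Longrightarrow> y \<in> L \<Longrightarrow> (\<lambda>i. x i + y i) \<in> L"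
  unfolding is_lattice_def by blast
lemma lat_neg: "is_lattice m L \<Longrightarrow> x \<in> L \<Longrightarrow> (\<lambda>i. - x i) \<in> L"
  unfolding is_lattice_def by blast
lemma lat_zero: "is_lattice m L \<Longrightarrow> (\<lambda>_. 0) \<in> L"
  unfolding is_lattice_def by blast

lemma zd_swap_L: "is_lattice m L \<Longrightarrow> zd a b \<in> L \<Longrightarrow> zd b a \<in> L"
  by (subst zd_swap) (rule lat_neg)

definition chi :: "(nat \<Rightarrow> int) set \<Rightarrow> (nat \<Rightarrow>\<^sub>0 nat) \<Rightarrow> 'k::comm_ring_1 mpoly \<Rightarrow> 'k" where
  "chi L a p = (\<Sum>u\<in>ks p. if zd u a \<in> L then lk p u else 0)"

lemma chi_add: "chi L a (p + q) = chi L a p + chi L a q"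
  unfolding chi_def by (rule setsum_keys_plus_distrib) auto

lemma chi_zero: "chi L a 0 = 0" by (simp add: chi_def)

lemma chi_sum: "chi L a (sum f A) = (\<Sum>x\<in>A. chi L a (f x))"
  by (induction A rule: infinite_finite_induct) (simp_all add: chi_zero chi_add)

lemma chi_minus: "chi L a (p - q) = chi L a p - chi L a q"
proof -
  have "chi L a p = chi L a (p - q + q)" by simp
  also have "\<dots> = chi L a (p - q) + chi L a q" by (rule chi_add)
  finally show ?thesis by simp
qed

lemma chi_single: "chi L a (sg u c) = (if zd u a \<in> L then c else 0)"
  by (simp add: chi_def)

lemma mult_single_expand: "(c::'k::comm_ring_1 mpoly) * sg b 1 = (\<Sum>u\<in>ks c. sg (u + b) (lk c u))"
proof -
  have "c * sg b 1 = (\<Sum>u\<in>ks c. sg u (lk c u)) * sg b 1" by (subst expand[symmetric]) (rule refl)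
  then show ?thesis by (simp add: sum_distrib_right mult_single)
qed

lemma chi_binom:
  assumes L: "is_lattice m L" and w: "zd b b' \<in> L"
  shows "chi L a ((c::'k::comm_ring_1 mpoly) * (sg b 1 - sg b' 1)) = 0"
proof -
  have eq: "zd (u + b) a \<in> L \<longleftrightarrow> zd (u + b') a \<in> L" for u
  proof -
    have 1: "zd (u + b) a = (\<lambda>i. zd (u + b') a i + zd b b' i)"
      by (simp add: zd_def lookup_add fun_eq_iff)
    have 2: "zd (u + b') a = (\<lambda>i. zd (u + b) a i + - zd b b' i)"
      by (simp add: zd_def lookup_add fun_eq_iff)
    show ?thesis
    proof
      assume "zd (u + b) a \<in> L"
      from lat_add[OF L this lat_neg[OF L w]] 2 show "zd (u + b') a \<in> L" by simp
    next
      assume "zd (u + b') a \<in> L"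
      from lat_add[OF L this w] 1 show "zd (u + b) a \<in> L" by simp
    qed
  qed
  have "c * (sg b 1 - sg b' 1) = c * sg b 1 - c * sg b' 1" by (simp only: right_diff_distrib)
  then have "chi L a (c * (sg b 1 - sg b' 1)) = chi L a (c * sg b 1) - chi L a (c * sg b' 1)"
    by (simp only: chi_minus)
  also have "\<dots> = (\<Sum>u\<in>ks c. chi L a (sg (u + b) (lk c u))) - (\<Sum>u\<in>ks c. chi L a (sg (u + b') (lk c u)))"
    by (simp only: mult_single_expand chi_sum)
  also have "\<dots> = 0"
    by (simp only: chi_single eq) simp
  finally show ?thesis .
qed

lemma chi_ideal:
  assumes L: "is_lattice m L" and p: "p \<in> lattice_ideal K m L"
  shows "chi L a p = 0"
proof -
  from p obtain G cf where G: "finite G" "G \<subseteq> {xmon (posp m u) - xmon (posp m (\<lambda>i. - u i)) | u. u \<in> L}"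
    and pe: "p = (\<Sum>g\<in>G. cf g * g)"
    unfolding lattice_ideal_def gen_ideal_def by blast
  have "chi L a (cf g * g) = 0" if gG: "g \<in> G" for g
  proof -
    obtain u where u: "u \<in> L" "g = xmon (posp m u) - xmon (posp m (\<lambda>i. - u i))" using G(2) gG by blast
    have "u \<in> zvec m" using L u unfolding is_lattice_def by blast
    then have "zd (posp m u) (posp m (\<lambda>i. - u i)) \<in> L" using zd_posp u by simp
    from chi_binom[OF L this] show ?thesis using u by (simp only: xmon_def)
  qed
  then show ?thesis by (simp add: pe chi_sum)
qed

lemma neighbor:
  assumes L: "is_lattice m L" and p: "p \<in> lattice_ideal K m L" and u: "u \<in> ks p"
  shows "\<exists>u'\<in>ks p. u' \<noteq> u \<and> zd u' u \<in> L"
proof (rule ccontr)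
  assume "\<not> ?thesis"
  then have no: "\<And>x. x \<in> ks p \<Longrightarrow> x \<noteq> u \<Longrightarrow> zd x u \<notin> L" by blast
  have "chi L u p = (\<Sum>x\<in>ks p. if x = u then lk p u else 0)"
    unfolding chi_def using no by (intro sum.cong refl) (auto simp: zd_self lat_zero[OF L])
  also have "\<dots> = lk p u" using u by simp
  finally have "lk p u = 0" using chi_ideal[OF L p] by simp
  then show False using u by (simp add: in_keys_iff)
qed



lemma is_exp_add: "is_exp m a \<Longrightarrow> is_exp m b \<Longrightarrow> is_exp m (a + b)"
  unfolding is_exp_def by (simp add: keys_add_nat)

lemma polys_mult: "p \<in> polys m \<Longrightarrow> q \<in> polys m \<Longrightarrow> p * q \<in> polys m"
  unfolding polys_def using keys_mult[of p q] is_exp_add by blast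

lemma polys_sum: "(\<And>x. x \<in> A \<Longrightarrow> f x \<in> polys m) \<Longrightarrow> sum f A \<in> polys m"
  unfolding polys_def using keys_sum[of f A] by blast

lemma polys_diff: "p \<in> polys m \<Longrightarrow> q \<in> polys m \<Longrightarrow> p - q \<in> polys m"
proof -
  have "ks (p - q) \<subseteq> ks p \<union> ks q" by (auto simp: in_keys_iff lookup_minus)
  then show "p \<in> polys m \<Longrightarrow> q \<in> polys m \<Longrightarrow> p - q \<in> polys m" unfolding polys_def by blast
qed

lemma xmon_polys: "is_exp m u \<Longrightarrow> xmon u \<in> polys m"
  unfolding polys_def xmon_def by simp

lemma one_polys: "1 \<in> polys m"
  unfolding polys_def is_exp_def by simp

lemma gen_ideal_polys: "S \<subseteq> polys m \<Longrightarrow> gen_ideal m S \<subseteq> polys m"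
  unfolding gen_ideal_def by (auto intro!: polys_sum polys_mult)

lemma gen_in: "s \<in> S \<Longrightarrow> s \<in> gen_ideal m S"
  unfolding gen_ideal_def
  by (rule CollectI, rule exI[of _ "{s}"], rule exI[of _ "\<lambda>_. 1"]) (simp add: one_polys)

lemma lattice_ideal_polys: "lattice_ideal K m L \<subseteq> polys m"
  unfolding lattice_ideal_def
  by (rule gen_ideal_polys) (auto intro!: polys_diff xmon_polys is_exp_posp)

lemma xmon_add: "xmon (a + b) = (xmon a * xmon b :: 'k::comm_ring_1 mpoly)"
  by (simp add: xmon_def mult_single)

lemma binom_in:
  fixes K :: "'k::comm_ring_1 itself"
  assumes L: "is_lattice m L" and g: "is_exp m g" and h: "is_exp m h" and w: "zd g h \<in> L"
  shows "(xmon g - xmon h :: 'k mpoly) \<in> lattice_ideal K m L"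
proof -
  define w where "w = zd g h"
  define c where "c = Abs_poly_mapping (\<lambda>i. min (lk g i) (lk h i))"
  have fin: "finite {i. min (lk g i) (lk h i) \<noteq> 0}"
    by (rule finite_subset[of _ "ks g"]) (auto simp: in_keys_iff)
  have lc: "lk c i = min (lk g i) (lk h i)" for i unfolding c_def using fin by simp
  have zg: "lk g i = 0" if "\<not> i < m" for i using g that unfolding is_exp_def by (auto simp: in_keys_iff)
  have zh: "lk h i = 0" if "\<not> i < m" for i using h that unfolding is_exp_def by (auto simp: in_keys_iff)
  have g1: "g = c + posp m w"
  proof (rule poly_mapping_eqI)
    fix i show "lk g i = lk (c + posp m w) i"
      unfolding lookup_add lookup_posp lc w_def zd_def using zg[of i] by auto
  qed
  have h1: "h = c + posp m (\<lambda>i. - w i)"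
  proof (rule poly_mapping_eqI)
    fix i show "lk h i = lk (c + posp m (\<lambda>i. - w i)) i"
      unfolding lookup_add lookup_posp lc w_def zd_def using zh[of i] by auto
  qed
  have "ks c \<subseteq> ks g" by (auto simp: in_keys_iff lc)
  then have cexp: "is_exp m c" using g unfolding is_exp_def by blast
  let ?gen = "xmon (posp m w) - xmon (posp m (\<lambda>i. - w i)) :: 'k mpoly"
  have eq: "xmon g - xmon h = xmon c * ?gen"
  proof -
    have "xmon g - xmon h = (xmon (c + posp m w) - xmon (c + posp m (\<lambda>i. - w i)) :: 'k mpoly)"
      using arg_cong[OF g1, of xmon] arg_cong[OF h1, of xmon] by (rule arg_cong2)
    then show ?thesis by (simp only: xmon_add right_diff_distrib)
  qed
  have gm: "?gen \<in> {xmon (posp m u) - xmon (posp m (\<lambda>i. - u i)) | u. u \<in> L}" using w w_def by blast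
  have "{?gen} \<subseteq> {xmon (posp m u) - xmon (posp m (\<lambda>i. - u i)) | u. u \<in> L}" using gm by simp
  moreover have "\<forall>x\<in>{?gen}. (\<lambda>_. xmon c) x \<in> polys m" using xmon_polys[OF cexp] by simp
  moreover have "xmon g - xmon h = (\<Sum>x\<in>{?gen}. (\<lambda>_. xmon c) x * x)" using eq by simp
  ultimately show ?thesis unfolding lattice_ideal_def gen_ideal_def
    by (intro CollectI exI[of _ "{?gen}"] exI[of _ "\<lambda>_. xmon c"] conjI) auto
qed

lemma mult_single_lookup_zero:
  assumes "\<not> (\<forall>i. lk a i \<le> lk g i)"
  shows "lk ((c::'k::comm_ring_1 mpoly) * sg a 1) g = 0"
proof -
  have "u + a \<noteq> g" for u using assms by (auto simp: lookup_add)
  then show ?thesis by (simp add: mult_single_expand lookup_sum lookup_single)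
qed

definition PP :: "nat \<Rightarrow> (nat \<Rightarrow> int) set \<Rightarrow> (nat \<Rightarrow>\<^sub>0 nat) \<Rightarrow> bool" where
  "PP m L g \<longleftrightarrow> is_exp m g \<and> (\<exists>h. is_exp m h \<and> h \<noteq> g \<and> zd g h \<in> L)"

definition le :: "(nat \<Rightarrow>\<^sub>0 nat) \<Rightarrow> (nat \<Rightarrow>\<^sub>0 nat) \<Rightarrow> bool" where
  "le a b \<longleftrightarrow> (\<forall>i. lk a i \<le> lk b i)"

lemma min_indisp:
  fixes K :: "'k::comm_ring_1 itself"
  assumes L: "is_lattice m L" and Pg: "PP m L g"
    and mn: "\<And>g'. le g' g \<Longrightarrow> g' \<noteq> g \<Longrightarrow> \<not> PP m L g'"
  shows "indispensable_monomial K m L g"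
  unfolding indispensable_monomial_def
proof (intro conjI allI impI)
  show "is_exp m g" using Pg PP_def by blast
  fix B assume gen: "binomial_gen_system K m L B"
  show "\<exists>(u, v)\<in>B. g = u \<or> g = v"
  proof (rule ccontr)
    assume nB: "\<not> ?thesis"
    obtain h where h: "is_exp m h" "h \<noteq> g" "zd g h \<in> L" using Pg PP_def by blast
    have gexp: "is_exp m g" using Pg PP_def by blast
    have Bok: "\<forall>(u,v)\<in>B. is_exp m u \<and> is_exp m v \<and> u \<noteq> v" using gen unfolding binomial_gen_system_def by blast
    have nB': "\<forall>(u,v)\<in>B. g \<noteq> u \<and> g \<noteq> v" using nB by blast
    let ?S = "{(xmon u - xmon v :: 'k mpoly) | u v. (u, v) \<in> B}"
    have Seq: "gen_ideal m ?S = lattice_ideal K m L" using gen binomial_gen_system_def by blast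
    have "(xmon g - xmon h :: 'k mpoly) \<in> lattice_ideal K m L" by (rule binom_in[OF L gexp h(1) h(3)])
    then obtain G cf where G: "finite G" "G \<subseteq> ?S" and xe: "(xmon g - xmon h :: 'k mpoly) = (\<Sum>j\<in>G. cf j * j)"
      unfolding Seq[symmetric] gen_ideal_def by blast
    have "lk (cf j * j) g = 0" if jG: "j \<in> G" for j
    proof -
      obtain a b where ab: "(a, b) \<in> B" "j = xmon a - xmon b" using G(2) jG by blast
      have abp: "is_exp m a" "is_exp m b" "a \<noteq> b" using Bok ab(1) by auto
      have "j \<in> ?S" using ab by blast
      then have jI: "j \<in> lattice_ideal K m L" unfolding Seq[symmetric] by (rule gen_in)
      have ka: "a \<in> ks j" using ab abp by (simp add: xmon_def in_keys_iff lookup_minus lookup_single)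
      have kj: "ks j \<subseteq> {a, b}" using ab by (auto simp: xmon_def in_keys_iff lookup_minus lookup_single when_def split: if_splits)
      obtain u' where u': "u' \<in> ks j" "u' \<noteq> a" "zd u' a \<in> L" using neighbor[OF L jI ka] by blast
      have "u' = b" using u' kj by auto
      then have ba: "zd b a \<in> L" and ab2: "zd a b \<in> L" using u' zd_swap_L[OF L] by auto
      have "PP m L a" unfolding PP_def using abp ab2 by blast
      moreover have "a \<noteq> g" using nB' ab(1) by auto
      ultimately have na: "\<not> le a g" using mn by blast
      have "PP m L b" unfolding PP_def using abp ba by blast
      moreover have "b \<noteq> g" using nB' ab(1) by auto
      ultimately have nb: "\<not> le b g" using mn by blast
      have "cf j * j = cf j * sg a 1 - cf j * sg b 1" using ab by (simp add: xmon_def right_diff_distrib)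
      moreover have "lk (cf j * sg a 1) g = 0" using mult_single_lookup_zero na unfolding le_def by blast
      moreover have "lk (cf j * sg b 1) g = 0" using mult_single_lookup_zero nb unfolding le_def by blast
      ultimately show ?thesis by (simp add: lookup_minus)
    qed
    then have "lk (xmon g - xmon h :: 'k mpoly) g = 0" unfolding xe lookup_sum by simp
    then show False using h(2) by (simp add: xmon_def lookup_minus lookup_single)
  qed
qed

definition deg :: "nat \<Rightarrow> (nat \<Rightarrow>\<^sub>0 nat) \<Rightarrow> nat" where
  "deg m g = (\<Sum>i<m. lk g i)"

lemma exists_min:
  assumes P0: "PP m L g0"
  shows "\<exists>g. le g g0 \<and> PP m L g \<and> (\<forall>g'. le g' g \<and> g' \<noteq> g \<longrightarrow> \<not> PP m L g')"
proof -
  have "PP m L g0 \<and> le g0 g0" using P0 by (simp add: le_def)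
  then have "\<exists>x. (PP m L x \<and> le x g0) \<and> (\<forall>y. (PP m L y \<and> le y g0) \<longrightarrow> deg m x \<le> deg m y)"
    by (rule ex_has_least_nat)
  then obtain g where g: "PP m L g" "le g g0" and least: "\<forall>y. (PP m L y \<and> le y g0) \<longrightarrow> deg m g \<le> deg m y"
    by blast
  have "\<not> PP m L g'" if lg: "le g' g" and ng: "g' \<noteq> g" for g'
  proof
    assume Pg': "PP m L g'"
    have "lk g' j \<le> lk g0 j" for j using lg g(2) unfolding le_def by (meson le_trans)
    then have "le g' g0" unfolding le_def by blast
    then have d1: "deg m g \<le> deg m g'" using least Pg' by blast
    have "\<exists>i. lk g' i \<noteq> lk g i"
    proof (rule ccontr)
      assume "\<not> (\<exists>i. lk g' i \<noteq> lk g i)"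
      then have "g' = g" by (intro poly_mapping_eqI) blast
      with ng show False by contradiction
    qed
    then obtain i where i: "lk g' i \<noteq> lk g i" by blast
    have "i < m"
    proof (rule ccontr)
      assume "\<not> i < m"
      moreover have "ks g \<subseteq> {..<m}" "ks g' \<subseteq> {..<m}" using g(1) Pg' unfolding PP_def is_exp_def by auto
      ultimately have "i \<notin> ks g" "i \<notin> ks g'" by auto
      then show False using i by (simp add: in_keys_iff)
    qed
    have le_all: "\<forall>x\<in>{..<m}. lk g' x \<le> lk g x" using lg unfolding le_def by blast
    have "lk g' i \<le> lk g i" using lg unfolding le_def by blast
    then have "lk g' i < lk g i" using i by simp
    then have ex: "\<exists>a\<in>{..<m}. lk g' a < lk g a" using \<open>i < m\<close> by blast
    have "deg m g' < deg m g" unfolding deg_def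
      using sum_strict_mono_ex1[OF finite_lessThan le_all ex] .
    then show False using d1 by simp
  qed
  then show ?thesis using g by blast
qed

lemma tmin_keys:
  fixes K :: "'k::comm_ring_1 itself"
  assumes L: "is_lattice m L" and E: "E \<in> Tmin K m L" and p: "p \<in> lattice_ideal K m L"
    and u: "u \<in> ks p" and sub: "ks u \<subseteq> E"
  shows "ks u = E"
proof -
  have pp: "p \<in> polys m" using p lattice_ideal_polys by blast
  obtain u' where u': "u' \<in> ks p" "u' \<noteq> u" "zd u' u \<in> L" using neighbor[OF L p u] by blast
  have "PP m L u" unfolding PP_def using pp u u' zd_swap_L[OF L u'(3)] unfolding polys_def by blast
  from exists_min[OF this] obtain g where g: "le g u" "PP m L g" "\<forall>g'. le g' g \<and> g' \<noteq> g \<longrightarrow> \<not> PP m L g'"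
    by blast
  have "indispensable_monomial K m L g" using min_indisp[OF L g(2)] g(3) by blast
  then have "ks g \<in> Tsupp K m L" unfolding Tsupp_def by blast
  moreover have kg: "ks g \<subseteq> ks u"
  proof
    fix x assume "x \<in> ks g"
    then have "lk g x \<noteq> 0" by (simp add: in_keys_iff)
    moreover have "lk g x \<le> lk u x" using g(1) unfolding le_def by blast
    ultimately show "x \<in> ks u" by (simp add: in_keys_iff)
  qed
  ultimately have "ks g = E" using E sub unfolding Tmin_def by blast
  then show ?thesis using kg sub by blast
qed



lemma gen_ideal_mono: "S0 \<subseteq> S \<Longrightarrow> gen_ideal m S0 \<subseteq> gen_ideal m S"
  unfolding gen_ideal_def by blast

lemma gen_ideal_drop0:
  assumes "S \<subseteq> insert 0 S0"
  shows "gen_ideal m S \<subseteq> gen_ideal m S0"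
proof
  fix p assume "p \<in> gen_ideal m S"
  then obtain G c where G: "finite G" "G \<subseteq> S" "\<forall>g\<in>G. c g \<in> polys m" and pe: "p = (\<Sum>g\<in>G. c g * g)"
    unfolding gen_ideal_def by blast
  have "(\<Sum>g\<in>G. c g * g) = (\<Sum>g\<in>G - {0}. c g * g)"
    by (rule sum.mono_neutral_right) (use G in auto)
  moreover have "G - {0} \<subseteq> S0" using G assms by blast
  ultimately show "p \<in> gen_ideal m S0" unfolding gen_ideal_def using G pe
    by (intro CollectI exI[of _ "G - {0}"] exI[of _ c]) auto
qed

lemma indisp_binom:
  fixes K :: "'k::comm_ring_1 itself"
  assumes L: "is_lattice m L" and w: "indispensable_monomial K m L w"
  shows "\<exists>v. is_exp m v \<and> v \<noteq> w \<and> (xmon w - xmon v :: 'k mpoly) \<in> lattice_ideal K m L"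
proof -
  define B0 where "B0 = {(posp m u, posp m (\<lambda>i. - u i)) | u. u \<in> L \<and> u \<noteq> (\<lambda>_. 0)}"
  let ?S = "{xmon (posp m u) - xmon (posp m (\<lambda>i. - u i)) | u. u \<in> L} :: 'k mpoly set"
  let ?T = "{(xmon a - xmon b :: 'k mpoly) | a b. (a, b) \<in> B0}"
  have ne: "posp m u \<noteq> posp m (\<lambda>i. - u i)" if "u \<in> L" "u \<noteq> (\<lambda>_. 0)" for u
  proof
    assume eq: "posp m u = posp m (\<lambda>i. - u i)"
    have "u \<in> zvec m" using L that(1) unfolding is_lattice_def by blast
    then have "u = zd (posp m u) (posp m (\<lambda>i. - u i))" by (simp add: zd_posp)
    also have "\<dots> = (\<lambda>_. 0)" using eq by (simp add: zd_self)
    finally show False using that(2) by contradiction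
  qed
  have "\<forall>(a, b)\<in>B0. is_exp m a \<and> is_exp m b \<and> a \<noteq> b"
    unfolding B0_def using ne is_exp_posp by blast
  moreover have "gen_ideal m ?T = lattice_ideal K m L"
  proof
    show "gen_ideal m ?T \<subseteq> lattice_ideal K m L" unfolding lattice_ideal_def
      by (rule gen_ideal_mono) (auto simp: B0_def)
    have "?S \<subseteq> insert 0 ?T"
    proof (rule subsetI)
      fix x assume "x \<in> ?S"
      then obtain u where u: "u \<in> L" "x = xmon (posp m u) - xmon (posp m (\<lambda>i. - u i))" by blast
      show "x \<in> insert 0 ?T"
      proof (cases "u = (\<lambda>_. 0)")
        case True then show ?thesis using u by simp
      next
        case False then have "(posp m u, posp m (\<lambda>i. - u i)) \<in> B0" unfolding B0_def using u by blast
        then show ?thesis using u by blast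
      qed
    qed
    then show "lattice_ideal K m L \<subseteq> gen_ideal m ?T" unfolding lattice_ideal_def
      by (rule gen_ideal_drop0)
  qed
  ultimately have "binomial_gen_system K m L B0" unfolding binomial_gen_system_def by blast
  then obtain a b where ab: "(a, b) \<in> B0" "w = a \<or> w = b"
    using w unfolding indispensable_monomial_def by blast
  then obtain u where u: "u \<in> L" "u \<noteq> (\<lambda>_. 0)" "a = posp m u" "b = posp m (\<lambda>i. - u i)"
    unfolding B0_def by blast
  have ne2: "b \<noteq> a" using ne[OF u(1,2)] u by simp
  show ?thesis
  proof (cases "w = a")
    case True
    have "xmon w - xmon b \<in> ?S" using u True by blast
    then have mem: "xmon w - xmon b \<in> lattice_ideal K m L" unfolding lattice_ideal_def by (rule gen_in)
    have "is_exp m b" using u(4) is_exp_posp by simp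
    then show ?thesis using mem ne2 True by blast
  next
    case False
    then have wb: "w = b" using ab by blast
    have nu: "(\<lambda>i. - u i) \<in> L" using lat_neg[OF L u(1)] .
    have "xmon (posp m (\<lambda>i. - u i)) - xmon (posp m (\<lambda>i. - (- u i))) \<in> ?S" using nu by blast
    then have "xmon w - xmon a \<in> ?S" using wb u by simp
    then have mem: "xmon w - xmon a \<in> lattice_ideal K m L" unfolding lattice_ideal_def by (rule gen_in)
    have "is_exp m a" using u(3) is_exp_posp by simp
    then show ?thesis using mem ne2 wb by blast
  qed
qed



lemma vertex_found:
  fixes K :: "'k::field itself" and F :: "nat \<Rightarrow> 'k mpoly"
  assumes L: "is_lattice m L"
    and FI: "\<forall>i<s. F i \<in> lattice_ideal K m L"
    and rad: "radical m (lattice_ideal K m L) = radical m (gen_ideal m (F ` {..<s}))"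
    and E: "E \<in> Tmin K m L" and w: "indispensable_monomial K m L w" and Ew: "E = ks w"
  shows "\<exists>i<s. \<exists>u\<in>ks (F i). ks u = E"
proof (rule ccontr)
  assume nf: "\<not> ?thesis"
  obtain v where v: "is_exp m v" "v \<noteq> w" "(xmon w - xmon v :: 'k mpoly) \<in> lattice_ideal K m L"
    using indisp_binom[OF L w] by blast
  let ?b = "xmon w - xmon v :: 'k mpoly"
  have "?b \<in> polys m" using v(3) lattice_ideal_polys by blast
  then have "?b \<in> radical m (lattice_ideal K m L)" unfolding radical_def using v(3)
    by (intro CollectI conjI exI[of _ "1::nat"]) auto
  then have "?b \<in> radical m (gen_ideal m (F ` {..<s}))" using rad by simp
  then obtain N where N: "?b ^ N \<in> gen_ideal m (F ` {..<s})" unfolding radical_def by blast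
  then obtain G c where G: "finite G" "G \<subseteq> F ` {..<s}" and be: "?b ^ N = (\<Sum>g\<in>G. c g * g)"
    unfolding gen_ideal_def by blast
  have piF: "pi E g = 0" if gG: "g \<in> G" for g
  proof -
    obtain i where i: "i < s" "g = F i" using G(2) gG by blast
    show ?thesis
    proof (rule poly_mapping_eqI)
      fix u
      show "lk (pi E g) u = lk 0 u"
      proof (cases "u \<in> ks g \<and> ks u \<subseteq> E")
        case True
        then have "ks u = E" using tmin_keys[OF L E, of "F i" u] FI i by auto
        then show ?thesis using True nf i by blast
      next
        case False
        then show ?thesis by (auto simp: lookup_pi in_keys_iff)
      qed
    qed
  qed
  have "pi E (?b ^ N) = 0" unfolding be pi_sum
    by (rule sum.neutral) (simp add: pi_mult piF)
  moreover have "pi E ?b \<noteq> 0"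
  proof
    assume "pi E ?b = 0"
    then have "lk (pi E ?b) w = 0" by simp
    moreover have "lk (pi E ?b) w = 1" using v(2) Ew
      by (simp add: lookup_pi xmon_def lookup_minus lookup_single)
    ultimately show False by simp
  qed
  ultimately show False by (simp add: pi_power)
qed

theorem theorem2p9:
  fixes K :: "'k::field itself"
    and m n :: nat
    and A :: "nat \<Rightarrow> nat \<Rightarrow> int"
    and L :: "(nat \<Rightarrow> int) set"
    and s :: nat
    and F :: "nat \<Rightarrow> 'k mpoly"
  assumes "is_lattice m L"
    and "L \<noteq> {\<lambda>_. 0}"
    and "\<forall>u\<in>L. (\<forall>i. 0 \<le> u i) \<longrightarrow> u = (\<lambda>_. 0)"
    and "Sat m L = kerZ m n A"
    and "\<forall>i<s. F i \<in> lattice_ideal K m L"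
    and "radical m (lattice_ideal K m L) = radical m (gen_ideal m (F ` {..<s}))"
  shows "spanning_subcomplex K m n A L (\<Union>i<s. GammaF K m n A L (F i))"
  unfolding spanning_subcomplex_def
proof (intro conjI)
  show "(\<Union>i<s. GammaF K m n A L (F i)) \<subseteq> GammaL K m n A L"
    unfolding GammaF_def by blast
  show "\<forall>\<sigma>\<in>\<Union>i<s. GammaF K m n A L (F i). \<forall>\<tau>\<subseteq>\<sigma>. \<tau> \<in> (\<Union>i<s. GammaF K m n A L (F i))"
  proof (intro ballI allI impI)
    fix \<sigma> \<tau> assume s1: "\<sigma> \<in> (\<Union>i<s. GammaF K m n A L (F i))" and t: "\<tau> \<subseteq> \<sigma>"
    then obtain i where i: "i < s" "\<sigma> \<in> GammaF K m n A L (F i)" by blast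
    then have "\<tau> \<in> GammaF K m n A L (F i)" using t unfolding GammaF_def GammaL_def
      by (smt (verit, ccfv_threshold) mem_Collect_eq subset_trans subsetD)
    then show "\<tau> \<in> (\<Union>i<s. GammaF K m n A L (F i))" using i by blast
  qed
  show "\<Union>(\<Union>i<s. GammaF K m n A L (F i)) = Tmin K m L"
  proof
    show "\<Union>(\<Union>i<s. GammaF K m n A L (F i)) \<subseteq> Tmin K m L"
      unfolding GammaF_def GammaL_def by blast
    show "Tmin K m L \<subseteq> \<Union>(\<Union>i<s. GammaF K m n A L (F i))"
    proof
      fix E assume E: "E \<in> Tmin K m L"
      then have "E \<in> Tsupp K m L" unfolding Tmin_def by blast
      then obtain w where w: "indispensable_monomial K m L w" "E = ks w" unfolding Tsupp_def by blast
      obtain i u where iu: "i < s" "u \<in> ks (F i)" "ks u = E"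
        using vertex_found[OF assms(1) assms(5) assms(6) E w] by blast
      have we: "is_exp m w" using w(1) unfolding indispensable_monomial_def by blast
      have "{E} \<in> GammaL K m n A L" unfolding GammaL_def
        using E we w(2) by (intro CollectI conjI exI[of _ "\<lambda>_. w"] exI[of _ "Adeg m n A w"]) auto
      then have "{E} \<in> GammaF K m n A L (F i)" unfolding GammaF_def using E iu by blast
      then show "E \<in> \<Union>(\<Union>i<s. GammaF K m n A L (F i))" using iu(1) by blast
    qed
  qed
qed

end
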